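(* Let $p,q$ be odd positive integers with $\gcd(p,q)=1$ and $p/q-1\in(-1,1)$. Then \[ \mathcal{O}(p/q)=\{\pm A(4\ell^2/q^2):\ \ell\in\{0,1,\dots,(q-1)/2\}\} \] and \[ \mathcal{E}(p/q)=\{\pm A((2\ell+1)^2/q^2):\ \ell\in\{0,1,\dots,(q-3)/2\}\}. \]
   Context: Nodes: $x_{k,n}:=2k/n-1$, $k=0,\dots,n$; $D_n(x)=\sum_{k=0}^n(-1)^k\frac{1}{x-x_{k,n}}$. $A(y)=\sum_{k=0}^\infty(-1)^k\frac{4k+2}{(2k+1)^2-y}$ for $y\in[0,1)$. A sequence $n_j$ is a strictly increasing map $\mathbb{N}\to\mathbb{N}$, odd (even) if all $n_j$ are odd (even); $x$ is regular for $n_j$ if there is $j_0$ with $x\notin\{x_{0,n_j},\dots,x_{n_j,n_j}\}$ for $j\ge j_0$. For a rational $r$ with $x=r-1\in(-1,1)$, $\mathcal{O}(r)$ is the set of $L\in\overline{\mathbb{R}}=\mathbb{R}\cup\{\pm\infty\}$ such that $\lim_{j\to\infty}D_{n_j}(x)/n_j=L$ for some odd sequence $n_j$ for which $x$ is regular; $\mathcal{E}(r)$ is defined likewise with even sequences. *)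

theory Defs
  imports "HOL-Analysis.Analysis" "HOL-Library.Extended_Real"
begin

definition node :: "nat \<Rightarrow> nat \<Rightarrow> real" where
  "node k n = 2 * real k / real n - 1"

definition D :: "nat \<Rightarrow> real \<Rightarrow> real" where
  "D n x = (\<Sum>k=0..n. (-1) ^ k * (1 / (x - node k n)))"

definition A :: "real \<Rightarrow> real" where
  "A y = (\<Sum>k. (-1) ^ k * ((4 * real k + 2) / ((2 * real k + 1)^2 - y)))"

definition regular :: "real \<Rightarrow> (nat \<Rightarrow> nat) \<Rightarrow> bool" where
  "regular x nj \<longleftrightarrow> (\<exists>j0. \<forall>j\<ge>j0. x \<notin> {node k (nj j) | k. k \<le> nj j})"

definition limit_set :: "(nat \<Rightarrow> bool) \<Rightarrow> real \<Rightarrow> ereal set" where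
  "limit_set par r = {L. \<exists>nj. strict_mono nj \<and> (\<forall>j. par (nj j)) \<and> regular (r - 1) nj \<and>
      ((\<lambda>j. ereal (D (nj j) (r - 1) / real (nj j))) \<longlonglongrightarrow> L)}"

definition Oset :: "real \<Rightarrow> ereal set" where
  "Oset r = limit_set odd r"

definition Eset :: "real \<Rightarrow> ereal set" where
  "Eset r = limit_set even r"

end

theory Submission imports Defs "HOL-Library.Infinite_Set" "HOL-Real_Asymp.Real_Asymp" begin

lemma leib_summable:
  fixes c :: real assumes "c > 0"
  shows "summable (\<lambda>j. (-1)^j * (1 / (2 * real j + c)))"
proof (rule summable_Leibniz(1))
  show "(\<lambda>j. 1 / (2 * real j + c)) \<longlonglongrightarrow> 0"
  proof -
    have "(\<lambda>j. 1 / (2 * real j + c)) = (\<lambda>j. inverse (2 * real j + c))" by (simp add: field_simps)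
    moreover have "filterlim (\<lambda>j. 2 * real j + c) at_top sequentially"
      by real_asymp
    ultimately show ?thesis using tendsto_inverse_0_at_top by metis
  qed
  show "monoseq (\<lambda>j. 1 / (2 * real j + c))"
    unfolding monoseq_Suc using assms by (auto intro!: divide_left_mono simp: field_simps)
qed

lemma sum_split_nat:
  fixes g :: "nat \<Rightarrow> real" assumes "K \<le> n"
  shows "(\<Sum>k=0..n. g k) = (\<Sum>j<K+1. g (K - j)) + (\<Sum>i<n-K. g (K+1+i))"
proof -
  have "{0..n} = {..<K+1} \<union> {K+1..n}" using assms by auto
  hence "(\<Sum>k=0..n. g k) = (\<Sum>k<K+1. g k) + (\<Sum>k=K+1..n. g k)"
    by (simp add: sum.union_disjoint ivl_disj_int)
  moreover have "(\<Sum>k<K+1. g k) = (\<Sum>j<K+1. g (K - j))"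
    using sum.nat_diff_reindex[of g "K+1", symmetric] by simp
  moreover have "(\<Sum>k=K+1..n. g k) = (\<Sum>i<n-K. g (K+1+i))"
  proof -
    have "(\<Sum>k=K+1..n. g k) = (\<Sum>k\<in>(\<lambda>i. K+1+i) ` {..<n-K}. g k)"
    proof (rule sum.cong)
      show "{K + 1..n} = (\<lambda>i. K+1+i) ` {..<n-K}"
        apply (rule set_eqI) apply (auto simp: image_iff)
        apply (rule_tac x="x - (K+1)" in bexI) by auto
    qed simp
    also have "\<dots> = (\<Sum>i<n-K. g (K+1+i))" by (subst sum.reindex) (auto simp: inj_on_def)
    finally show ?thesis .
  qed
  ultimately show ?thesis by simp
qed

lemma neg1_pow_diff: "j \<le> K \<Longrightarrow> (-1::real)^(K-j) = (-1)^K * (-1)^j"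
proof -
  assume "j \<le> K"
  hence "(-1::real)^K = (-1)^(K-j) * (-1)^j" by (metis le_add_diff_inverse2 power_add)
  hence "(-1::real)^K * (-1)^j = (-1)^(K-j) * ((-1)^j * (-1)^j)" by simp
  also have "(-1::real)^j * (-1)^j = 1" by (simp flip: power_add)
  finally show ?thesis by simp
qed

lemma odd_param:
  fixes q r :: int
  assumes "odd r" "0 < r" "r < 2*q" "odd q"
  shows "\<exists>l. (q-r)^2 = 4*l^2 \<and> 0 \<le> l \<and> l \<le> (q-1) div 2"
proof -
  obtain m where m: "q = 2*m+1" using assms(4) by (metis oddE)
  obtain a where a: "r = 2*a+1" using assms(1) by (metis oddE)
  have qd: "(q-1) div 2 = m" using m by simp
  have b: "0 \<le> a" "a \<le> 2*m" using assms(2,3) m a by linarith+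
  have "(q-r)^2 = 4*\<bar>m-a\<bar>^2" using m a by (simp add: power2_eq_square algebra_simps abs_mult_self_eq)
  moreover have "0 \<le> \<bar>m-a\<bar>" "\<bar>m-a\<bar> \<le> (q-1) div 2" using b qd by auto
  ultimately show ?thesis by blast
qed

lemma even_param:
  fixes q r :: int
  assumes "even r" "0 < r" "r < 2*q" "odd q"
  shows "\<exists>l. (q-r)^2 = (2*l+1)^2 \<and> 0 \<le> l \<and> l \<le> (q-3) div 2"
proof -
  obtain m where m: "q = 2*m+1" using assms(4) by (metis oddE)
  obtain a where a: "r = 2*a" using assms(1) by (metis evenE)
  have qd: "(q-3) div 2 = m - 1" using m by simp
  have b: "1 \<le> a" "a \<le> 2*m" using assms(2,3) m a by linarith+
  show ?thesis
  proof (cases "a \<le> m")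
    case True
    hence "(q-r)^2 = (2*(m-a)+1)^2 \<and> 0 \<le> m-a \<and> m-a \<le> (q-3) div 2" using m a b qd by simp
    thus ?thesis by blast
  next
    case False
    have "(q-r)^2 = (2*(a-m-1)+1)^2" using m a by (simp add: power2_eq_square algebra_simps)
    moreover have "0 \<le> a-m-1 \<and> a-m-1 \<le> (q-3) div 2" using False b qd by simp
    ultimately show ?thesis by blast
  qed
qed

lemma odd_mod_2q: "0 < (q::int) \<Longrightarrow> odd (\<rho> mod (2*q)) \<longleftrightarrow> odd \<rho>"
proof -
  assume "0 < q"
  have e: "\<rho> = 2*q*(\<rho> div (2*q)) + \<rho> mod (2*q)" by simp
  have "even (2*q*(\<rho> div (2*q)))" by simp
  thus ?thesis using e by (metis even_add)
qed

locale cset =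
  fixes p q :: int
  assumes p_pos: "p > 0" and q_pos: "q > 0" and odd_p: "odd p" and odd_q: "odd q"
    and cop: "gcd p q = 1" and p_lt: "p < 2*q"
begin

definition "x = real_of_int p / real_of_int q - 1"
definition "f n = D n x / real n"
definition "alpha t j = (-1)^j * (1/(2*real j + t))"
definition "beta t j = (-1)^j * (1/(2*real j + (2 - t)))"
definition "V r = (\<Sum>j. alpha (real_of_int r / real_of_int q) j) + (\<Sum>j. beta (real_of_int r / real_of_int q) j)"
definition "w \<rho> = (if \<rho> < 2*q then 1 else -1) * V (\<rho> mod (2*q))"

lemma f_eq:
  assumes "n > 0"
  shows "f n = (\<Sum>k=0..n. (-1)^k * (real_of_int q / (real_of_int (p * int n) - 2 * real k * real_of_int q)))"
proof -
  have qn: "real_of_int q \<noteq> 0" "real n \<noteq> 0" using q_pos assms by auto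
  have "x - node k n = (real_of_int (p * int n) - 2 * real k * real_of_int q) / (real_of_int q * real n)" for k
    unfolding x_def node_def using qn by (simp add: field_simps)
  hence "f n = (\<Sum>k=0..n. (-1)^k * (1 / ((real_of_int (p * int n) - 2 * real k * real_of_int q) / (real_of_int q * real n)))) / real n"
    unfolding f_def D_def by simp
  also have "\<dots> = (\<Sum>k=0..n. (-1)^k * (1 / ((real_of_int (p * int n) - 2 * real k * real_of_int q) / (real_of_int q * real n))) / real n)"
    by (simp add: sum_divide_distrib)
  also have "\<dots> = (\<Sum>k=0..n. (-1)^k * (real_of_int q / (real_of_int (p * int n) - 2 * real k * real_of_int q)))"
  proof (intro sum.cong refl)
    fix k
    have "c * (1 / (a / (real_of_int q * real n))) / real n = c * (real_of_int q / a)" for a c :: real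
      using qn by (simp add: divide_divide_eq_right)
    thus "(-1)^k * (1 / ((real_of_int (p * int n) - 2 * real k * real_of_int q) / (real_of_int q * real n))) / real n
      = (-1)^k * (real_of_int q / (real_of_int (p * int n) - 2 * real k * real_of_int q))" .
  qed
  finally show ?thesis .
qed

lemma f_split:
  assumes n: "n > 0" and r: "0 < (p * int n) mod (2*q)"
  defines "K \<equiv> nat ((p * int n) div (2*q))" and "t \<equiv> real_of_int ((p * int n) mod (2*q)) / real_of_int q"
  shows "K < n" "f n = (-1)^K * ((\<Sum>j<K+1. alpha t j) + (\<Sum>i<n-K. beta t i))"
proof -
  define P where "P = p * int n"
  define R where "R = P mod (2*q)"
  have "0 \<le> P div (2*q)" unfolding P_def using p_pos n q_pos by (simp add: pos_imp_zdiv_nonneg_iff)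
  hence P: "P = 2*q*int K + R" unfolding P_def R_def K_def by simp
  have Pn: "P < 2*q*int n" unfolding P_def using p_lt n by simp
  have R: "0 \<le> R" "R < 2*q" unfolding R_def using q_pos by auto
  show Kn: "K < n"
  proof -
    have "2*q*int K < 2*q*int n" using P Pn R by linarith
    thus ?thesis using q_pos by simp
  qed
  have qn: "real_of_int q > 0" using q_pos by simp
  have PR: "real_of_int P = 2 * real_of_int q * real K + real_of_int R" using P
    by (metis of_int_add of_int_mult of_int_numeral of_int_of_nat_eq)
  have tR: "t = real_of_int R / real_of_int q" unfolding t_def R_def P_def ..
  let ?g = "\<lambda>k. (-1)^k * (real_of_int q / (real_of_int (p * int n) - 2 * real k * real_of_int q))"
  have "f n = (\<Sum>j<K+1. ?g (K - j)) + (\<Sum>i<n-K. ?g (K+1+i))"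
    using f_eq[OF n] sum_split_nat[of K n ?g] Kn by simp
  also have "(\<Sum>j<K+1. ?g (K - j)) = (\<Sum>j<K+1. (-1)^K * alpha t j)"
  proof (rule sum.cong[OF refl])
    fix j assume "j \<in> {..<K+1}"
    hence j: "j \<le> K" by simp
    have "real_of_int (p * int n) - 2 * real (K - j) * real_of_int q = real_of_int q * (2 * real j + t)"
      using PR j qn unfolding tR P_def by (simp add: of_nat_diff field_simps)
    thus "?g (K - j) = (-1)^K * alpha t j"
      unfolding alpha_def using neg1_pow_diff[OF j] qn by simp
  qed
  also have "(\<Sum>i<n-K. ?g (K+1+i)) = (\<Sum>i<n-K. (-1)^K * beta t i)"
  proof (rule sum.cong[OF refl])
    fix i
    have "real_of_int (p * int n) - 2 * real (K+1+i) * real_of_int q = - (real_of_int q * (2 * real i + (2 - t)))"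
      using PR qn unfolding tR P_def by (simp add: field_simps)
    thus "?g (K+1+i) = (-1)^K * beta t i"
      unfolding beta_def using qn by (simp add: power_add)
  qed
  finally show "f n = (-1)^K * ((\<Sum>j<K+1. alpha t j) + (\<Sum>i<n-K. beta t i))"
    by (simp add: sum_distrib_left distrib_left)
qed

lemma sign_lemma:
  assumes "0 \<le> P"
  shows "(-1::real)^(nat (P div (2*q))) = (if P mod (4*q) < 2*q then 1 else -1)"
    and "(P mod (4*q)) mod (2*q) = P mod (2*q)"
proof -
  have e: "P mod (4*q) = 2*q * (P div (2*q) mod 2) + P mod (2*q)"
    using zmod_zmult2_eq[of 2 P "2*q"] q_pos by (simp add: mult.commute mult.left_commute)
  have r: "0 \<le> P mod (2*q)" "P mod (2*q) < 2*q" using q_pos by auto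
  have d: "0 \<le> P div (2*q)" using assms q_pos by (simp add: pos_imp_zdiv_nonneg_iff)
  show "(P mod (4*q)) mod (2*q) = P mod (2*q)" using e r by simp
  show "(-1::real)^(nat (P div (2*q))) = (if P mod (4*q) < 2*q then 1 else -1)"
  proof (cases "even (P div (2*q))")
    case True
    hence "P div (2*q) mod 2 = 0" by presburger
    moreover have "even (nat (P div (2*q)))" using True d by (simp add: even_nat_iff)
    ultimately show ?thesis using e r by simp
  next
    case False
    hence "P div (2*q) mod 2 = 1" by presburger
    moreover have "odd (nat (P div (2*q)))" using False d by (simp add: even_nat_iff)
    moreover have "\<not> P mod (4*q) < 2*q" using calculation e r by simp
    ultimately show ?thesis by simp
  qed
qed

lemma conv:
  assumes rho: "0 \<le> \<rho>" "\<rho> < 4*q" "0 < \<rho> mod (2*q)" and eps: "\<epsilon> > 0"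
  shows "\<exists>N. \<forall>n\<ge>N. (p * int n) mod (4*q) = \<rho> \<longrightarrow> \<bar>f n - w \<rho>\<bar> < \<epsilon>"
proof -
  define r where "r = \<rho> mod (2*q)"
  define t where "t = real_of_int r / real_of_int q"
  have rr: "0 < r" "r < 2*q" unfolding r_def using rho q_pos by auto
  have t: "0 < t" "t < 2" unfolding t_def using rr q_pos by (auto simp: field_simps)
  have sa: "summable (alpha t)" unfolding alpha_def using leib_summable[of t] t by simp
  have sb: "summable (beta t)" unfolding beta_def using leib_summable[of "2 - t"] t by simp
  have "(\<lambda>m. \<Sum>i<m. alpha t i) \<longlonglongrightarrow> suminf (alpha t)" using summable_LIMSEQ[OF sa] .
  then obtain N1 where N1: "\<And>m. m \<ge> N1 \<Longrightarrow> \<bar>(\<Sum>i<m. alpha t i) - suminf (alpha t)\<bar> < \<epsilon>/2"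
    using LIMSEQ_D[of _ _ "\<epsilon>/2"] eps by (metis half_gt_zero real_norm_def)
  have "(\<lambda>m. \<Sum>i<m. beta t i) \<longlonglongrightarrow> suminf (beta t)" using summable_LIMSEQ[OF sb] .
  then obtain N2 where N2: "\<And>m. m \<ge> N2 \<Longrightarrow> \<bar>(\<Sum>i<m. beta t i) - suminf (beta t)\<bar> < \<epsilon>/2"
    using LIMSEQ_D[of _ _ "\<epsilon>/2"] eps by (metis half_gt_zero real_norm_def)
  define N where "N = nat (2*q) * (N1 + N2 + 1)"
  show ?thesis
  proof (intro exI allI impI)
    fix n assume nN: "N \<le> n" and cl: "(p * int n) mod (4*q) = \<rho>"
    define P where "P = p * int n"
    have P0: "0 \<le> P" unfolding P_def using p_pos by simp
    have Pr: "P mod (2*q) = r" unfolding r_def using sign_lemma(2)[OF P0] cl P_def by simp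
    have "int N = 2*q * (int N1 + int N2 + 1)" unfolding N_def using q_pos by (simp add: algebra_simps)
    hence nN': "2*q * (int N1 + int N2 + 1) \<le> int n" using nN by linarith
    have big: "2*q*int N1 \<le> 2*q * (int N1 + int N2 + 1)" "2*q*int N2 \<le> 2*q * (int N1 + int N2 + 1)"
      "0 < 2*q * (int N1 + int N2 + 1)"
      using q_pos by (auto intro!: mult_left_mono)
    have n0: "n > 0" using nN' big by linarith
    have rp: "0 < (p * int n) mod (2*q)" using Pr rr P_def by simp
    define K where "K = nat ((p * int n) div (2*q))"
    have tt: "t = real_of_int ((p * int n) mod (2*q)) / real_of_int q" using Pr P_def t_def by simp
    have fn: "f n = (-1)^K * ((\<Sum>j<K+1. alpha t j) + (\<Sum>i<n-K. beta t i))"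
      using f_split(2)[OF n0 rp] unfolding K_def tt .
    have Kn: "K < n" using f_split(1)[OF n0 rp] unfolding K_def .
    have PK0: "P = 2*q*(P div (2*q)) + r" by (metis Pr mult_div_mod_eq)
    have "0 \<le> P div (2*q)" using P0 q_pos by (simp add: pos_imp_zdiv_nonneg_iff)
    hence PK: "P = 2*q*int K + r" unfolding K_def using PK0 P_def by simp
    have "P \<ge> int n" unfolding P_def using p_pos mult_right_mono[of 1 p "int n"] by simp
    moreover have "2*q*(int K + 1) > P" using PK rr by (simp add: algebra_simps)
    ultimately have "2*q*(int K + 1) > 2*q*int N1" using nN' big by linarith
    hence "int K + 1 > int N1" using q_pos by (simp add: mult_less_cancel_left_pos)
    hence k1: "K + 1 \<ge> N1" by linarith
    have "P \<le> (2*q - 1) * int n" unfolding P_def using p_lt by (simp add: mult_right_mono)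
    hence "2*q*int K \<le> 2*q*int n - int n" using PK rr by (simp add: algebra_simps)
    hence "2*q*(int n - int K) \<ge> int n" by (simp add: algebra_simps)
    hence "2*q*(int n - int K) \<ge> 2*q*int N2" using nN' big by linarith
    hence "int n - int K \<ge> int N2" using q_pos by (simp add: mult_le_cancel_left_pos)
    hence k2: "n - K \<ge> N2" using Kn by linarith
    have sg: "(-1::real)^K = (if \<rho> < 2*q then 1 else -1)"
      using sign_lemma(1)[OF P0] cl unfolding K_def P_def by simp
    have wr: "w \<rho> = (-1)^K * (suminf (alpha t) + suminf (beta t))"
      unfolding w_def V_def sg r_def[symmetric] t_def[symmetric] ..
    have "\<bar>f n - w \<rho>\<bar> = \<bar>((\<Sum>j<K+1. alpha t j) - suminf (alpha t)) + ((\<Sum>i<n-K. beta t i) - suminf (beta t))\<bar>"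
      unfolding fn wr using sg by (cases "\<rho> < 2*q") (auto simp: algebra_simps)
    also have "\<dots> < \<epsilon>" using N1[OF k1] N2[OF k2] by linarith
    finally show "\<bar>f n - w \<rho>\<bar> < \<epsilon>" .
  qed
qed

lemma V_A:
  assumes "0 < r" "r < 2*q"
  shows "V r = A (real_of_int ((q - r)^2) / real_of_int q ^ 2)"
proof -
  define t where "t = real_of_int r / real_of_int q"
  have t: "0 < t" "t < 2" unfolding t_def using assms q_pos by (auto simp: field_simps)
  have sa: "summable (alpha t)" unfolding alpha_def using leib_summable[of t] t by simp
  have sb: "summable (beta t)" unfolding beta_def using leib_summable[of "2 - t"] t by simp
  have y: "real_of_int ((q - r)^2) / real_of_int q ^ 2 = (1 - t)^2"
    unfolding t_def using q_pos by (simp add: field_simps power2_eq_square)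
  have "V r = (\<Sum>j. alpha t j + beta t j)"
    unfolding V_def t_def[symmetric] using suminf_add[OF sa sb] by simp
  also have "\<dots> = A ((1 - t)^2)" unfolding A_def
  proof (rule suminf_cong)
    fix j
    have a: "2 * real j + t > 0" "2 * real j + (2 - t) > 0" using t by auto
    have "(2 * real j + 1)^2 - (1 - t)^2 = (2 * real j + t) * (2 * real j + (2 - t))"
      by (simp add: power2_eq_square algebra_simps)
    moreover have "1 / (2 * real j + t) + 1 / (2 * real j + (2 - t)) = (4 * real j + 2) / ((2 * real j + t) * (2 * real j + (2 - t)))"
      using a by (simp add: field_simps)
    moreover have "alpha t j + beta t j = (-1)^j * (1 / (2 * real j + t) + 1 / (2 * real j + (2 - t)))"
      unfolding alpha_def beta_def by (simp add: algebra_simps)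
    ultimately show "alpha t j + beta t j = (-1)^j * ((4 * real j + 2) / ((2 * real j + 1)^2 - (1 - t)^2))"
      by simp
  qed
  finally show ?thesis using y by simp
qed

lemma node_iff:
  assumes "n > 0"
  shows "x = node k n \<longleftrightarrow> p * int n = 2 * int k * q"
proof -
  have qn: "real_of_int q \<noteq> 0" "real n \<noteq> 0" using q_pos assms by auto
  have "x = node k n \<longleftrightarrow> real_of_int p / real_of_int q = 2 * real k / real n"
    unfolding x_def node_def by simp
  also have "\<dots> \<longleftrightarrow> real_of_int p * real n = 2 * real k * real_of_int q"
    using qn by (simp add: field_simps)
  also have "\<dots> \<longleftrightarrow> real_of_int (p * int n) = real_of_int (2 * int k * q)" by simp
  also have "\<dots> \<longleftrightarrow> p * int n = 2 * int k * q" by (rule of_int_eq_iff)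
  finally show ?thesis .
qed

lemma node_mod:
  assumes "n > 0" "x \<in> {node k n | k. k \<le> n}"
  shows "(p * int n) mod (2*q) = 0"
  using assms node_iff[OF assms(1)] by (auto simp: mult.commute mult.left_commute)

lemma odd_class:
  "odd ((p * int n) mod (4*q)) \<longleftrightarrow> odd n"
proof -
  have e: "p*int n = 4*q*((p*int n) div (4*q)) + (p*int n) mod (4*q)" by simp
  have "even (4*q*((p*int n) div (4*q)))" by simp
  hence "odd ((p * int n) mod (4*q)) \<longleftrightarrow> odd (p * int n)" using e by (metis even_add)
  thus ?thesis using odd_p by (auto simp: even_mult_iff)
qed

lemma class_tendsto:
  assumes rho: "0 \<le> \<rho>" "\<rho> < 4*q" "0 < \<rho> mod (2*q)"
    and mono: "\<And>i. e i \<ge> i" and cl: "\<And>i. (p * int (e i)) mod (4*q) = \<rho>"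
  shows "(\<lambda>i. f (e i)) \<longlonglongrightarrow> w \<rho>"
proof (rule LIMSEQ_I)
  fix \<epsilon> :: real assume "\<epsilon> > 0"
  from conv[OF rho this] obtain N where N: "\<And>n. n \<ge> N \<Longrightarrow> (p * int n) mod (4*q) = \<rho> \<Longrightarrow> \<bar>f n - w \<rho>\<bar> < \<epsilon>"
    by blast
  show "\<exists>no. \<forall>i\<ge>no. norm (f (e i) - w \<rho>) < \<epsilon>"
    using N cl mono by (metis le_trans real_norm_def)
qed

lemma limset:
  assumes par: "\<And>n. par n = (odd n = b)"
  shows "limit_set par (real_of_int p / real_of_int q) =
    {ereal (w \<rho>) | \<rho>. 0 \<le> \<rho> \<and> \<rho> < 4*q \<and> 0 < \<rho> mod (2*q) \<and> odd \<rho> = b}"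
proof (intro set_eqI iffI)
  fix L assume "L \<in> limit_set par (real_of_int p / real_of_int q)"
  then obtain nj where sm: "strict_mono nj" and pj: "\<And>j. par (nj j)" and reg: "regular x nj"
    and lim: "(\<lambda>j. ereal (f (nj j))) \<longlonglongrightarrow> L"
    unfolding limit_set_def x_def[symmetric] f_def[symmetric] by blast
  define rf where "rf j = (p * int (nj j)) mod (4*q)" for j
  have "finite (rf ` UNIV)"
    by (rule finite_subset[of _ "{0..<4*q}"]) (auto simp: rf_def q_pos)
  then obtain j0 where inf: "infinite {j. rf j = rf j0}"
    using pigeonhole_infinite[of "UNIV :: nat set" rf] by auto
  define S where "S = {j. rf j = rf j0}"
  define \<rho> where "\<rho> = rf j0"
  have r1: "0 \<le> \<rho>" "\<rho> < 4*q" unfolding \<rho>_def rf_def using q_pos by auto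
  have r2: "odd \<rho> = b" unfolding \<rho>_def rf_def using odd_class pj par by simp
  from reg obtain j1 where j1: "\<And>j. j \<ge> j1 \<Longrightarrow> x \<notin> {node k (nj j) | k. k \<le> nj j}"
    unfolding regular_def by blast
  obtain j where jS: "j \<in> S" and jj: "j \<ge> j1 + 1"
    using inf unfolding S_def infinite_nat_iff_unbounded_le by blast
  have njpos: "nj j > 0" using seq_suble[OF sm, of j] jj by simp
  have r3: "0 < \<rho> mod (2*q)"
  proof (rule ccontr)
    assume "\<not> 0 < \<rho> mod (2*q)"
    hence "\<rho> mod (2*q) = 0" using q_pos by (metis mod_int_pos_iff order_le_less pos_mod_sign zero_less_mult_iff zero_less_numeral)
    hence P: "(p * int (nj j)) mod (2*q) = 0"
      using sign_lemma(2)[of "p * int (nj j)"] p_pos jS unfolding S_def \<rho>_def rf_def by simp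
    define k where "k = (p * int (nj j)) div (2*q)"
    have k0: "0 \<le> k" unfolding k_def using p_pos q_pos by (simp add: pos_imp_zdiv_nonneg_iff)
    have Pk: "p * int (nj j) = 2 * k * q" using P unfolding k_def by (metis mult.commute mult_div_mod_eq add_0_right mult.assoc)
    have "p * int (nj j) < 2*q*int (nj j)" using p_lt njpos by simp
    hence "k < int (nj j)" using Pk q_pos by (simp add: algebra_simps)
    hence "nat k \<le> nj j" by simp
    moreover have "x = node (nat k) (nj j)" using node_iff[OF njpos] Pk k0 by simp
    ultimately have "x \<in> {node k (nj j) | k. k \<le> nj j}" by blast
    thus False using j1[of j] jj by simp
  qed
  define e where "e = enumerate S"
  have sme: "strict_mono e" unfolding e_def using strict_mono_enumerate inf S_def by blast
  have eS: "e i \<in> S" for i unfolding e_def using enumerate_in_set inf S_def by blast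
  have "(\<lambda>i. f (nj (e i))) \<longlonglongrightarrow> w \<rho>"
  proof (rule class_tendsto[OF r1 r3])
    show "i \<le> nj (e i)" for i using seq_suble[OF sme, of i] seq_suble[OF sm, of "e i"] by simp
    show "(p * int (nj (e i))) mod (4*q) = \<rho>" for i using eS[of i] unfolding S_def \<rho>_def rf_def by simp
  qed
  hence l1: "(\<lambda>i. ereal (f (nj (e i)))) \<longlonglongrightarrow> ereal (w \<rho>)" by (rule tendsto_ereal)
  have l2: "(\<lambda>i. ereal (f (nj (e i)))) \<longlonglongrightarrow> L" using LIMSEQ_subseq_LIMSEQ[OF lim sme] by (simp add: comp_def)
  have "L = ereal (w \<rho>)" using LIMSEQ_unique[OF l2 l1] .
  thus "L \<in> {ereal (w \<rho>) | \<rho>. 0 \<le> \<rho> \<and> \<rho> < 4*q \<and> 0 < \<rho> mod (2*q) \<and> odd \<rho> = b}"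
    using r1 r2 r3 by blast
next
  fix L assume "L \<in> {ereal (w \<rho>) | \<rho>. 0 \<le> \<rho> \<and> \<rho> < 4*q \<and> 0 < \<rho> mod (2*q) \<and> odd \<rho> = b}"
  then obtain \<rho> where L: "L = ereal (w \<rho>)" and r1: "0 \<le> \<rho>" "\<rho> < 4*q" and r3: "0 < \<rho> mod (2*q)"
    and r2: "odd \<rho> = b" by blast
  have cp: "coprime p (4*q)"
  proof -
    have "coprime p q" using cop by (simp add: coprime_iff_gcd_eq_1)
    moreover have "coprime p 4"
    proof -
      have "coprime p 2" using odd_p by simp
      hence "coprime p (2*2)" by (simp only: coprime_mult_right_iff)
      thus ?thesis by simp
    qed
    ultimately show ?thesis by simp
  qed
  obtain u v where uv: "u * p + v * (4*q) = 1"
    using bezout_int[of p "4*q"] cp by (metis coprime_iff_gcd_eq_1)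
  define u' where "u' = u mod (4*q)"
  have u'0: "0 \<le> u'" unfolding u'_def using q_pos by simp
  have pu: "(p * u') mod (4*q) = 1 mod (4*q)"
  proof -
    have "(p * u') mod (4*q) = (p * u) mod (4*q)" unfolding u'_def by (simp add: mod_mult_right_eq)
    also have "p * u = 1 + (- v) * (4*q)" using uv by (simp add: algebra_simps)
    also have "(1 + (- v) * (4*q)) mod (4*q) = 1 mod (4*q)" by (rule mod_mult_self1)
    finally show ?thesis .
  qed
  define nj where "nj j = nat (u' * \<rho>) + nat (4*q) * (j + 1)" for j
  have nji: "int (nj j) = u' * \<rho> + 4*q*(int j + 1)" for j
    unfolding nj_def using u'0 r1 q_pos by (simp add: algebra_simps)
  have cl: "(p * int (nj j)) mod (4*q) = \<rho>" for j
  proof -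
    have "p * int (nj j) = (p * u') * \<rho> + (p * (int j + 1)) * (4*q)" unfolding nji by (simp add: algebra_simps)
    hence "(p * int (nj j)) mod (4*q) = ((p * u') * \<rho>) mod (4*q)" by simp
    also have "\<dots> = ((p * u') mod (4*q) * \<rho>) mod (4*q)" by (simp add: mod_mult_left_eq)
    also have "\<dots> = \<rho> mod (4*q)" unfolding pu by (simp add: mod_mult_left_eq)
    also have "\<dots> = \<rho>" using r1 by simp
    finally show ?thesis .
  qed
  have sm: "strict_mono nj" unfolding strict_mono_def nj_def using q_pos by simp
  have pos: "nj j > 0" for j unfolding nj_def using q_pos by simp
  have pj: "par (nj j)" for j using par odd_class[of "nj j"] cl[of j] r2 by simp
  have reg: "regular x nj" unfolding regular_def
  proof (rule exI[of _ 0], intro allI impI)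
    fix j :: nat assume "0 \<le> j"
    show "x \<notin> {node k (nj j) | k. k \<le> nj j}"
    proof
      assume "x \<in> {node k (nj j) | k. k \<le> nj j}"
      hence "(p * int (nj j)) mod (2*q) = 0" by (rule node_mod[OF pos])
      thus False using sign_lemma(2)[of "p * int (nj j)"] p_pos cl[of j] r3 by simp
    qed
  qed
  have "(\<lambda>j. f (nj j)) \<longlonglongrightarrow> w \<rho>"
    by (rule class_tendsto[OF r1 r3 seq_suble[OF sm] cl])
  hence "(\<lambda>j. ereal (f (nj j))) \<longlonglongrightarrow> L" unfolding L by (rule tendsto_ereal)
  thus "L \<in> limit_set par (real_of_int p / real_of_int q)"
    unfolding limit_set_def x_def[symmetric] f_def[symmetric] using sm pj reg by blast
qed

lemma w_form:
  assumes "0 \<le> \<rho>" "\<rho> < 4*q" "0 < \<rho> mod (2*q)"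
  shows "w \<rho> = (if \<rho> < 2*q then 1 else -1) * A (real_of_int ((q - \<rho> mod (2*q))^2) / real_of_int q ^ 2)"
  unfolding w_def using V_A[OF assms(3)] q_pos by simp

lemma set_odd:
  "{ereal (w \<rho>) | \<rho>. 0 \<le> \<rho> \<and> \<rho> < 4*q \<and> 0 < \<rho> mod (2*q) \<and> odd \<rho> = True} =
   {ereal (A (4 * real_of_int l ^ 2 / real_of_int q ^ 2)) | l. l \<in> {0 .. (q - 1) div 2}} \<union>
   {- ereal (A (4 * real_of_int l ^ 2 / real_of_int q ^ 2)) | l. l \<in> {0 .. (q - 1) div 2}}"
  (is "?L = ?R1 \<union> ?R2")
proof (intro set_eqI iffI)
  fix z assume "z \<in> ?L"
  then obtain \<rho> where z: "z = ereal (w \<rho>)" and r: "0 \<le> \<rho>" "\<rho> < 4*q" "0 < \<rho> mod (2*q)" "odd \<rho>" by auto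
  have "odd (\<rho> mod (2*q))" using odd_mod_2q[OF q_pos] r(4) by simp
  then obtain l where l: "(q - \<rho> mod (2*q))^2 = 4*l^2" "0 \<le> l" "l \<le> (q-1) div 2"
    using odd_param[of "\<rho> mod (2*q)" q] r(3) q_pos odd_q by auto
  have "real_of_int ((q - \<rho> mod (2*q))^2) = real_of_int (4*l^2)" using l(1) by simp
  hence e: "real_of_int ((q - \<rho> mod (2*q))^2) = 4 * real_of_int l ^ 2" by simp
  have w: "w \<rho> = (if \<rho> < 2*q then 1 else -1) * A (4 * real_of_int l ^ 2 / real_of_int q ^ 2)"
    using w_form[OF r(1-3)] e by simp
  show "z \<in> ?R1 \<union> ?R2"
  proof (cases "\<rho> < 2*q")
    case True thus ?thesis using w z l by auto
  next
    case False thus ?thesis using w z l by auto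
  qed
next
  fix z assume "z \<in> ?R1 \<union> ?R2"
  then obtain l where l: "0 \<le> l" "l \<le> (q-1) div 2" and
    z: "z = ereal (A (4 * real_of_int l ^ 2 / real_of_int q ^ 2)) \<or> z = - ereal (A (4 * real_of_int l ^ 2 / real_of_int q ^ 2))"
    by auto
  obtain m where m: "q = 2*m+1" using odd_q by (metis oddE)
  have lm: "l \<le> m" using l m by simp
  define r where "r = q - 2*l"
  have rr: "0 < r" "r < 2*q" "odd r" unfolding r_def using l lm m by auto
  have e: "real_of_int ((q - r)^2) = 4 * real_of_int l ^ 2" unfolding r_def by (simp add: power2_eq_square)
  have rm: "r mod (2*q) = r" using rr by simp
  show "z \<in> ?L"
  proof (cases "z = ereal (A (4 * real_of_int l ^ 2 / real_of_int q ^ 2))")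
    case True
    have "w r = A (4 * real_of_int l ^ 2 / real_of_int q ^ 2)"
      using w_form[of r] rr rm e by simp
    thus ?thesis using True rr rm by (auto intro!: exI[of _ r])
  next
    case False
    hence z: "z = - ereal (A (4 * real_of_int l ^ 2 / real_of_int q ^ 2))" using z by simp
    define \<rho> where "\<rho> = r + 2*q"
    have rm2: "\<rho> mod (2*q) = r" unfolding \<rho>_def using rm by simp
    have pr: "0 \<le> \<rho>" "\<rho> < 4*q" "odd \<rho>" "\<not> \<rho> < 2*q" unfolding \<rho>_def using rr by auto
    have "w \<rho> = - A (4 * real_of_int l ^ 2 / real_of_int q ^ 2)"
      using w_form[of \<rho>] pr rm2 rr e by simp
    thus ?thesis using z pr rm2 rr by (auto intro!: exI[of _ \<rho>])
  qed
qed

lemma set_even: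
  "{ereal (w \<rho>) | \<rho>. 0 \<le> \<rho> \<and> \<rho> < 4*q \<and> 0 < \<rho> mod (2*q) \<and> odd \<rho> = False} =
   {ereal (A ((2 * real_of_int l + 1) ^ 2 / real_of_int q ^ 2)) | l. l \<in> {0 .. (q - 3) div 2}} \<union>
   {- ereal (A ((2 * real_of_int l + 1) ^ 2 / real_of_int q ^ 2)) | l. l \<in> {0 .. (q - 3) div 2}}"
  (is "?L = ?R1 \<union> ?R2")
proof (intro set_eqI iffI)
  fix z assume "z \<in> ?L"
  then obtain \<rho> where z: "z = ereal (w \<rho>)" and r: "0 \<le> \<rho>" "\<rho> < 4*q" "0 < \<rho> mod (2*q)" "even \<rho>" by auto
  have "even (\<rho> mod (2*q))" using odd_mod_2q[OF q_pos] r(4) by simp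
  then obtain l where l: "(q - \<rho> mod (2*q))^2 = (2*l+1)^2" "0 \<le> l" "l \<le> (q-3) div 2"
    using even_param[of "\<rho> mod (2*q)" q] r(3) q_pos odd_q by auto
  have "real_of_int ((q - \<rho> mod (2*q))^2) = real_of_int ((2*l+1)^2)" using l(1) by simp
  hence e: "real_of_int ((q - \<rho> mod (2*q))^2) = (2 * real_of_int l + 1) ^ 2" by simp
  have w: "w \<rho> = (if \<rho> < 2*q then 1 else -1) * A ((2 * real_of_int l + 1) ^ 2 / real_of_int q ^ 2)"
    using w_form[OF r(1-3)] e by simp
  show "z \<in> ?R1 \<union> ?R2"
  proof (cases "\<rho> < 2*q")
    case True thus ?thesis using w z l by auto
  next
    case False thus ?thesis using w z l by auto
  qed
next
  fix z assume "z \<in> ?R1 \<union> ?R2"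
  then obtain l where l: "0 \<le> l" "l \<le> (q-3) div 2" and
    z: "z = ereal (A ((2 * real_of_int l + 1) ^ 2 / real_of_int q ^ 2)) \<or> z = - ereal (A ((2 * real_of_int l + 1) ^ 2 / real_of_int q ^ 2))"
    by auto
  obtain m where m: "q = 2*m+1" using odd_q by (metis oddE)
  have lm: "l \<le> m - 1" using l m by simp
  define r where "r = q - 2*l - 1"
  have rr: "0 < r" "r < 2*q" "even r" unfolding r_def using l lm m by auto
  have e: "real_of_int ((q - r)^2) = (2 * real_of_int l + 1) ^ 2" unfolding r_def by (simp add: power2_eq_square)
  have rm: "r mod (2*q) = r" using rr by simp
  show "z \<in> ?L"
  proof (cases "z = ereal (A ((2 * real_of_int l + 1) ^ 2 / real_of_int q ^ 2))")
    case True
    have "w r = A ((2 * real_of_int l + 1) ^ 2 / real_of_int q ^ 2)"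
      using w_form[of r] rr rm e by simp
    thus ?thesis using True rr rm by (auto intro!: exI[of _ r])
  next
    case False
    hence z: "z = - ereal (A ((2 * real_of_int l + 1) ^ 2 / real_of_int q ^ 2))" using z by simp
    define \<rho> where "\<rho> = r + 2*q"
    have rm2: "\<rho> mod (2*q) = r" unfolding \<rho>_def using rm by simp
    have pr: "0 \<le> \<rho>" "\<rho> < 4*q" "even \<rho>" "\<not> \<rho> < 2*q" unfolding \<rho>_def using rr by auto
    have "w \<rho> = - A ((2 * real_of_int l + 1) ^ 2 / real_of_int q ^ 2)"
      using w_form[of \<rho>] pr rm2 rr e by simp
    thus ?thesis using z pr rm2 rr by (auto intro!: exI[of _ \<rho>])
  qed
qed

end

theorem corollary3:
  fixes p q :: int
  assumes "p > 0" "q > 0" "odd p" "odd q" "gcd p q = 1"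
    and "-1 < real_of_int p / real_of_int q - 1" "real_of_int p / real_of_int q - 1 < 1"
  shows "Oset (real_of_int p / real_of_int q) =
           {ereal (A (4 * real_of_int l ^ 2 / real_of_int q ^ 2)) | l. l \<in> {0 .. (q - 1) div 2}} \<union>
           {- ereal (A (4 * real_of_int l ^ 2 / real_of_int q ^ 2)) | l. l \<in> {0 .. (q - 1) div 2}} \<and>
         Eset (real_of_int p / real_of_int q) =
           {ereal (A ((2 * real_of_int l + 1) ^ 2 / real_of_int q ^ 2)) | l. l \<in> {0 .. (q - 3) div 2}} \<union>
           {- ereal (A ((2 * real_of_int l + 1) ^ 2 / real_of_int q ^ 2)) | l. l \<in> {0 .. (q - 3) div 2}}"
proof -
  have "real_of_int p / real_of_int q < 2" using assms(7) by simp
  hence "real_of_int p < 2 * real_of_int q" using assms(2) by (simp add: divide_less_eq)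
  hence "p < 2*q" by linarith
  then interpret cset p q using assms by unfold_locales auto
  have o: "Oset (real_of_int p / real_of_int q) =
    {ereal (w \<rho>) | \<rho>. 0 \<le> \<rho> \<and> \<rho> < 4*q \<and> 0 < \<rho> mod (2*q) \<and> odd \<rho> = True}"
    unfolding Oset_def by (rule limset) simp
  have e: "Eset (real_of_int p / real_of_int q) =
    {ereal (w \<rho>) | \<rho>. 0 \<le> \<rho> \<and> \<rho> < 4*q \<and> 0 < \<rho> mod (2*q) \<and> odd \<rho> = False}"
    unfolding Eset_def by (rule limset) simp
  show ?thesis unfolding o e set_odd set_even by (rule conjI) (rule refl)+
qed

end
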